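(* Let $n\geq 2$ and let $t\geq 2$ be even. Then no vertex of $D^*_{n,t}=D_{n,t}\setminus\{1^t\}$ is adjacent to $1^t$ in $S(K_n,t)$.
   Context: For a positive integer $n$ let $[n]=\{1,\dots,n\}$. For positive integers $n,t$, the Sierpiński graph $S(K_n,t)$ is the simple graph with vertex set $[n]^t$ (words $v_1v_2\cdots v_t$ with $v_i\in[n]$), in which $u_1\cdots u_t$ and $v_1\cdots v_t$ are adjacent if and only if there is $s\in[t]$ with $u_j=v_j$ for all $j<s$, $u_s\neq v_s$, and $u_j=v_s$ and $v_j=u_s$ for all $j>s$. Write $a^k$ for the word consisting of $k$ copies of the letter $a$. The sets $D_{n,t}\subseteq[n]^t$ are defined recursively: $D_{n,1}=\{1\}$, $D_{n,2}=\{11,21,\dots,n1\}$. For $t\geq 3$ and $\mathbf v=v_1\cdots v_{t-2}\in D_{n,t-2}$ put $E_1(\mathbf v)=\{v_1\cdots v_{t-2}\alpha\alpha:\alpha\in[n]\}$, $E_2(\mathbf v)=\{v_1\cdots v_{t-3}\alpha\beta v_{t-2}:\alpha,\beta\in[n]\setminus\{v_{t-2}\}\}$, and, if $\mathbf v$ is not a constant word, let $\ell$ be the largest index in $[t-3]$ with $v_\ell\neq v_{\ell+1}$ and put $E_3(\mathbf v)=\{v_1\cdots v_{\ell-1}v_{\ell+1}v_\ell^{\,t-\ell-2}\alpha v_\ell:\alpha\in[n]\setminus\{v_\ell\}\}$. If $t\geq 3$ is odd, $D_{n,t}=E_1(1^{t-2})\cup E_2(1^{t-2})\cup\bigcup_{\mathbf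 v\in D_{n,t-2}\setminus\{1^{t-2}\}}\big(E_1(\mathbf v)\cup E_2(\mathbf v)\cup E_3(\mathbf v)\big)$. If $t\geq 4$ is even, $D_{n,t}=\{1^{t-2}\alpha1:\alpha\in[n]\}\cup\bigcup_{\mathbf v\in D_{n,t-2}\setminus\{1^{t-2}\}}\big(E_1(\mathbf v)\cup E_2(\mathbf v)\cup E_3(\mathbf v)\big)$. (In this recursion $1^{t-2}\in D_{n,t-2}$ is the only constant word in $D_{n,t-2}$, so $E_3$ is applied only to non-constant words.) *)

theory Defs
  imports Main
begin

(* Words v_1 ... v_t over [n] are represented as lists of length t (0-based indices). *)

definition sierpinski_vertices :: "nat \<Rightarrow> nat \<Rightarrow> nat list set" where
  "sierpinski_vertices n t = {w. length w = t \<and> set w \<subseteq> {1..n}}"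

definition sierpinski_adj :: "nat \<Rightarrow> nat \<Rightarrow> nat list \<Rightarrow> nat list \<Rightarrow> bool" where
  "sierpinski_adj n t u v \<longleftrightarrow>
     u \<in> sierpinski_vertices n t \<and> v \<in> sierpinski_vertices n t \<and>
     (\<exists>s<t. (\<forall>j<s. u ! j = v ! j) \<and> u ! s \<noteq> v ! s \<and>
             (\<forall>j. s < j \<and> j < t \<longrightarrow> u ! j = v ! s \<and> v ! j = u ! s))"

definition E1 :: "nat \<Rightarrow> nat list \<Rightarrow> nat list set" where
  "E1 n v = {v @ [a, a] | a. a \<in> {1..n}}"

definition E2 :: "nat \<Rightarrow> nat list \<Rightarrow> nat list set" where
  "E2 n v = {butlast v @ [a, b, last v] | a b. a \<in> {1..n} - {last v} \<and> b \<in> {1..n} - {last v}}"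

(* 0-based index i = l - 1 of the largest position l in [t-3] with v_l \<noteq> v_{l+1} *)
definition lastchg :: "nat list \<Rightarrow> nat" where
  "lastchg v = (GREATEST i. i + 1 < length v \<and> v ! i \<noteq> v ! (i + 1))"

(* v_1 ... v_{l-1} v_{l+1} v_l^{t-l-2} alpha v_l, where length v = t - 2 *)
definition E3 :: "nat \<Rightarrow> nat list \<Rightarrow> nat list set" where
  "E3 n v = (let i = lastchg v in
     {take i v @ [v ! (i + 1)] @ replicate (length v - i - 1) (v ! i) @ [a, v ! i]
       | a. a \<in> {1..n} - {v ! i}})"

fun D :: "nat \<Rightarrow> nat \<Rightarrow> nat list set" where
  "D n 0 = {}"
| "D n (Suc 0) = {[1]}"
| "D n (Suc (Suc 0)) = {[a, 1] | a. a \<in> {1..n}}"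
| "D n (Suc (Suc (Suc k))) =
     (let t = k + 3; one = replicate (Suc k) (1::nat);
          rest = (\<Union>v \<in> D n (Suc k) - {one}. E1 n v \<union> E2 n v \<union> E3 n v)
      in if odd t then E1 n one \<union> E2 n one \<union> rest
         else {one @ [a, 1] | a. a \<in> {1..n}} \<union> rest)"

end

theory Submission
  imports Defs
begin

definition nc :: "nat list \<Rightarrow> bool" where
  "nc w \<longleftrightarrow> (\<exists>i<length w. w ! i \<noteq> w ! 0)"

lemma rep_nth: "j < k \<Longrightarrow> (replicate k a @ xs) ! j = a"
  by (simp add: nth_append)

lemma rep2: "replicate m x @ [x, x] = replicate (Suc (Suc m)) x"
  by (induction m) auto

lemma nc_I: "p < length w \<Longrightarrow> q < length w \<Longrightarrow> w ! p \<noteq> w ! q \<Longrightarrow> nc w"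
  unfolding nc_def by metis

lemma not_nc: "\<not> nc w \<Longrightarrow> w = replicate (length w) (w ! 0)"
  unfolding nc_def by (intro nth_equalityI) auto

lemma adj_exists:
  assumes "nc w" shows "\<exists>i. i + 1 < length w \<and> w ! i \<noteq> w ! (i + 1)"
proof (rule ccontr)
  assume h: "\<not> ?thesis"
  have "\<forall>i. i < length w \<longrightarrow> w ! i = w ! 0"
  proof
    fix i show "i < length w \<longrightarrow> w ! i = w ! 0"
    proof (induction i)
      case 0 show ?case by simp
    next
      case (Suc i)
      show ?case
      proof
        assume a: "Suc i < length w"
        hence "i + 1 < length w" by simp
        hence "w ! i = w ! (i + 1)" using h by blast
        moreover have "w ! i = w ! 0" using Suc a by simp
        ultimately show "w ! Suc i = w ! 0" by simp
      qed
    qed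
  qed
  with assms show False unfolding nc_def by blast
qed

lemma lastchg_prop:
  assumes "nc v"
  shows "lastchg v + 1 < length v \<and> v ! lastchg v \<noteq> v ! (lastchg v + 1)"
proof -
  obtain i where i: "i + 1 < length v \<and> v ! i \<noteq> v ! (i + 1)" using adj_exists[OF assms] by blast
  show ?thesis unfolding lastchg_def
    by (rule GreatestI_nat[of _ i "length v"]) (use i in auto)
qed

lemma E1_props:
  assumes "x \<in> E1 n v" "nc v"
  shows "length x = length v + 2 \<and> nc x \<and> (\<forall>c. c \<noteq> 1 \<longrightarrow> x \<noteq> replicate (length v + 1) 1 @ [c])"
proof -
  obtain a where x: "x = v @ [a, a]" using assms(1) unfolding E1_def by blast
  obtain i where i: "i < length v" "v ! i \<noteq> v ! 0" using assms(2) unfolding nc_def by blast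
  have "nc x" by (rule nc_I[of i _ 0]) (use i x in \<open>auto simp: nth_append\<close>)
  moreover have "x \<noteq> replicate (length v + 1) 1 @ [c]" if "c \<noteq> 1" for c
  proof
    assume h: "x = replicate (length v + 1) 1 @ [c]"
    hence "x ! length v = 1" by (simp only: rep_nth)
    moreover have "last x = c" using h by simp
    ultimately show False using x that by (simp add: nth_append)
  qed
  ultimately show ?thesis using x by auto
qed

lemma E2_props:
  assumes "x \<in> E2 n v" "v \<noteq> []"
  shows "length x = length v + 2 \<and> nc x \<and> (\<forall>c. c \<noteq> 1 \<longrightarrow> x = replicate (length v + 1) 1 @ [c]
         \<longrightarrow> v = replicate (length v - 1) 1 @ [c])"
proof -
  obtain a b where x: "x = butlast v @ [a, b, last v]" and ab: "a \<noteq> last v" "b \<noteq> last v"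
    using assms(1) unfolding E2_def by blast
  define m where "m = length v - 1"
  have lv: "length v = m + 1" using assms(2) m_def by simp
  have bl: "length (butlast v) = m" using lv by simp
  have x0: "x ! m = a" "x ! (m+1) = b" "x ! (m+2) = last v" using x bl by (auto simp: nth_append)
  have len: "length x = length v + 2" using x lv by simp
  have "nc x"
  proof (cases "a = b")
    case True thus ?thesis using x0 ab len lv by (intro nc_I[of "m+1" _ "m+2"]) auto
  next
    case False thus ?thesis using x0 ab len lv by (intro nc_I[of "m" _ "m+1"]) auto
  qed
  moreover have "v = replicate (length v - 1) 1 @ [c]"
    if c: "c \<noteq> 1" "x = replicate (length v + 1) 1 @ [c]" for c
  proof -
    have lc: "last v = c" using x0(3) c lv by (simp add: nth_append)
    have "\<forall>j<m. butlast v ! j = 1"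
    proof (intro allI impI)
      fix j assume "j < m"
      hence "x ! j = butlast v ! j" using x bl by (simp add: nth_append)
      moreover have "x ! j = 1" using c(2) \<open>j<m\<close> lv rep_nth[of j "length v + 1" 1 "[c]"] by simp
      ultimately show "butlast v ! j = 1" by simp
    qed
    hence "butlast v = replicate m 1" using bl by (intro nth_equalityI) auto
    hence "v = replicate m 1 @ [c]" using append_butlast_last_id[OF assms(2)] lc by metis
    thus ?thesis using m_def by simp
  qed
  ultimately show ?thesis using len by blast
qed

lemma E3_props:
  assumes "x \<in> E3 n v" "nc v"
  shows "length x = length v + 2 \<and> nc x \<and> (\<forall>c. c \<noteq> 1 \<longrightarrow> x \<noteq> replicate (length v + 1) 1 @ [c])"
proof -
  define i where "i = lastchg v"
  have i: "i + 1 < length v" "v ! i \<noteq> v ! (i + 1)" using lastchg_prop[OF assms(2)] i_def by auto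
  obtain a where x: "x = take i v @ [v ! (i + 1)] @ replicate (length v - i - 1) (v ! i) @ [a, v ! i]"
    using assms(1) unfolding E3_def Let_def i_def by blast
  have lt: "length (take i v) = i" using i by simp
  have len: "length x = length v + 2" using x i by simp
  have xi: "x ! i = v ! (i+1)" using x lt by (simp add: nth_append)
  have xi1: "x ! (i+1) = v ! i" using x lt i by (simp add: nth_append)
  have xl: "last x = v ! i" using x by simp
  have "nc x" using xi xi1 i len by (intro nc_I[of i _ "i+1"]) auto
  moreover have "x \<noteq> replicate (length v + 1) 1 @ [c]" if "c \<noteq> 1" for c
  proof
    assume h: "x = replicate (length v + 1) 1 @ [c]"
    hence "last x = c" "x ! (i+1) = 1" using i rep_nth[of "i+1" "length v + 1" 1 "[c]"] by auto
    with xi1 xl that show False by simp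
  qed
  ultimately show ?thesis using len by blast
qed

lemma D_inv:
  "w \<in> D n t \<Longrightarrow> length w = t \<and> (\<not> nc w \<longrightarrow> w = replicate t 1) \<and>
     (even t \<longrightarrow> (\<forall>c. c \<noteq> 1 \<longrightarrow> w \<noteq> replicate (t - 1) 1 @ [c]))"
proof (induction n t arbitrary: w rule: D.induct)
  case (1 n) thus ?case by simp
next
  case (2 n) thus ?case by auto
next
  case (3 n)
  then obtain a where w: "w = [a, 1]" by auto
  have "\<not> nc w \<Longrightarrow> w = replicate 2 1"
  proof -
    assume "\<not> nc w"
    hence "w ! 1 = w ! 0" unfolding nc_def using w by auto
    hence "a = 1" using w by simp
    thus ?thesis using w by (simp add: numeral_2_eq_2)
  qed
  thus ?case using w by (auto simp: numeral_2_eq_2)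
next
  case (4 n k)
  define one where "one = replicate (Suc k) (1::nat)"
  define rest where "rest = (\<Union>v \<in> D n (Suc k) - {one}. E1 n v \<union> E2 n v \<union> E3 n v)"
  have Dd: "D n (Suc (Suc (Suc k))) = (if odd (k+3) then E1 n one \<union> E2 n one \<union> rest
         else {one @ [a, 1] | a. a \<in> {1..n}} \<union> rest)"
    unfolding one_def rest_def by (simp add: Let_def)
  have goal_rest: ?case if wr: "w \<in> rest"
  proof -
    obtain v where v: "v \<in> D n (Suc k)" "v \<noteq> one" and wv: "w \<in> E1 n v \<union> E2 n v \<union> E3 n v"
      using wr unfolding rest_def by blast
    have IH: "length v = Suc k" "\<not> nc v \<longrightarrow> v = one"
      "even (Suc k) \<longrightarrow> (\<forall>c. c \<noteq> 1 \<longrightarrow> v \<noteq> replicate k 1 @ [c])"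
      using "4.IH"[OF refl refl v(1)] one_def by auto
    have ncv: "nc v" using IH v by blast
    have vne: "v \<noteq> []" using IH by auto
    show ?thesis
    proof (cases "w \<in> E2 n v")
      case True
      from E2_props[OF True vne] IH show ?thesis by auto
    next
      case False
      hence "w \<in> E1 n v \<or> w \<in> E3 n v" using wv by blast
      hence P: "length w = length v + 2 \<and> nc w \<and> (\<forall>c. c \<noteq> 1 \<longrightarrow> w \<noteq> replicate (length v + 1) 1 @ [c])"
        using E1_props[OF _ ncv] E3_props[OF _ ncv] by blast
      show ?thesis
      proof (intro conjI impI allI)
        show "length w = Suc (Suc (Suc k))" using P IH by simp
        show "w = replicate (Suc (Suc (Suc k))) 1" if "\<not> nc w" using P that by blast
        show "w \<noteq> replicate (Suc (Suc (Suc k)) - 1) 1 @ [c]" if "c \<noteq> 1" for c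
          using P that IH by simp
      qed
    qed
  qed
  show ?case
  proof (cases "w \<in> rest")
    case True thus ?thesis by (rule goal_rest)
  next
    case False
    note w = "4.prems"[unfolded Dd]
    show ?thesis
    proof (cases "odd (k+3)")
      case True
      hence "w \<in> E1 n one \<or> w \<in> E2 n one" using w False by auto
      thus ?thesis
      proof
        assume "w \<in> E1 n one"
        then obtain a where wa: "w = one @ [a, a]" unfolding E1_def by blast
        have "\<not> nc w \<Longrightarrow> w = replicate (Suc (Suc (Suc k))) 1"
        proof -
          assume "\<not> nc w"
          moreover have lw: "length w = Suc (Suc (Suc k))" using wa one_def by simp
          hence "Suc k < length w" by simp
          with \<open>\<not> nc w\<close> have e1: "w ! (Suc k) = w ! 0" unfolding nc_def by blast
          have e2: "w ! (Suc k) = a" using wa nth_append_length[of one a "[a]"] by (simp only: one_def length_replicate)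
          have e3: "w ! 0 = 1" using wa one_def by simp
          have "a = 1" using e1 e2 e3 by metis
          thus ?thesis using wa one_def by (simp only: rep2)
        qed
        thus ?thesis using wa one_def True by simp
      next
        assume "w \<in> E2 n one"
        from E2_props[OF this] one_def True show ?thesis by auto
      qed
    next
      case ev: False
      then obtain a where wa: "w = one @ [a, 1]" using w False by auto
      have C1: "\<not> nc w \<Longrightarrow> w = replicate (Suc (Suc (Suc k))) 1"
      proof -
        assume "\<not> nc w"
        moreover have lw: "length w = Suc (Suc (Suc k))" using wa one_def by simp
        hence "Suc k < length w" by simp
          with \<open>\<not> nc w\<close> have e1: "w ! (Suc k) = w ! 0" unfolding nc_def by blast
        have e2: "w ! (Suc k) = a" using wa nth_append_length[of one a "[1]"] by (simp only: one_def length_replicate)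
        have e3: "w ! 0 = 1" using wa one_def by simp
        have "a = 1" using e1 e2 e3 by metis
        thus ?thesis using wa one_def by (simp only: rep2)
      qed
      have C2: "w \<noteq> replicate (Suc (Suc k)) 1 @ [c]" if "c \<noteq> 1" for c
      proof
        assume "w = replicate (Suc (Suc k)) 1 @ [c]"
        hence "last w = c" by simp
        with wa that show False by simp
      qed
      have C0: "length w = Suc (Suc (Suc k))" using wa one_def by simp
      show ?thesis
      proof (intro conjI impI allI)
        show "length w = Suc (Suc (Suc k))" by (rule C0)
        show "w = replicate (Suc (Suc (Suc k))) 1" if "\<not> nc w" using C1 that by blast
        show "w \<noteq> replicate (Suc (Suc (Suc k)) - 1) 1 @ [c]" if "c \<noteq> 1" for c
          using C2[OF that] by simp
      qed
    qed
  qed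
qed

lemma adj_form:
  assumes "sierpinski_adj n t u (replicate t 1)"
  shows "u = replicate (t - 1) 1 @ [u ! (t - 1)] \<and> u ! (t - 1) \<noteq> 1"
proof -
  from assms obtain s where s: "s < t" "\<forall>j<s. u ! j = replicate t 1 ! j"
    "u ! s \<noteq> replicate t 1 ! s"
    "\<forall>j. s < j \<and> j < t \<longrightarrow> u ! j = replicate t 1 ! s \<and> replicate t 1 ! j = u ! s"
    and lu: "length u = t"
    unfolding sierpinski_adj_def sierpinski_vertices_def by blast
  have st: "s = t - 1"
  proof (rule ccontr)
    assume "s \<noteq> t - 1"
    hence "s < t - 1" using s by simp
    hence "replicate t 1 ! (t - 1) = u ! s" using s(4) by auto
    thus False using s(1,3) by simp
  qed
  have "u = replicate (t - 1) 1 @ [u ! (t - 1)]"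
  proof (rule nth_equalityI)
    show "length u = length (replicate (t - 1) 1 @ [u ! (t - 1)])" using lu s(1) by simp
  next
    fix i assume "i < length u"
    thus "u ! i = (replicate (t - 1) 1 @ [u ! (t - 1)]) ! i"
    proof (cases "i < t - 1")
      case True thus ?thesis using s(1,2) st lu by (auto simp: nth_append)
    next
      case False
      hence "i = t - 1" using \<open>i < length u\<close> lu by simp
      thus ?thesis using lu s(1) by (simp add: nth_append)
    qed
  qed
  moreover have "u ! (t - 1) \<noteq> 1" using s(1,3) st by simp
  ultimately show ?thesis by blast
qed

theorem mainTheorem9:
  fixes n t :: nat
  assumes "n \<ge> 2" and "t \<ge> 2" and "even t"
      and "u \<in> D n t - {replicate t 1}"
  shows "\<not> sierpinski_adj n t u (replicate t 1)"
proof
  assume "sierpinski_adj n t u (replicate t 1)"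
  from adj_form[OF this] have "u = replicate (t - 1) 1 @ [u ! (t - 1)]" "u ! (t - 1) \<noteq> 1" by auto
  with D_inv[of u n t] assms show False by blast
qed

end
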